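(* Let $X$ be a real Banach space with the Ball Dentable Property ($BDP$). Then for every separable closed subspace $Y$ of $X$ there exists a separable closed subspace $Z$ of $X$ with $Y\subseteq Z$ such that $Z$ has $BDP$.
   Context: For a real Banach space $X$, $B_X$ denotes its closed unit ball and $X^*$ its dual. A slice of a bounded set $C\subseteq X$ is a set $S(C,x^*,\alpha)=\{x\in C: x^*(x)>\sup x^*(C)-\alpha\}$ with $x^*\in X^*$, $\|x^*\|=1$, $\alpha>0$. $X$ has the Ball Dentable Property ($BDP$) if for every $\varepsilon>0$ there is a slice of $B_X$ of diameter less than $\varepsilon$. *)

theory Defs
  imports "HOL-Analysis.Analysis"
begin

text \<open>Closed unit ball of a subspace Z (Z = UNIV gives B_X).\<close>
definition unit_ball_on :: "'a::real_normed_vector set \<Rightarrow> 'a set" where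
  "unit_ball_on Z = {x \<in> Z. norm x \<le> 1}"

definition dual_unit_on :: "'a::real_normed_vector set \<Rightarrow> ('a \<Rightarrow> real) \<Rightarrow> bool" where
  "dual_unit_on Z f \<longleftrightarrow>
     (\<forall>x\<in>Z. \<forall>y\<in>Z. f (x + y) = f x + f y) \<and>
     (\<forall>c. \<forall>x\<in>Z. f (c *\<^sub>R x) = c * f x) \<and>
     (\<exists>K. \<forall>x\<in>Z. \<bar>f x\<bar> \<le> K * norm x) \<and>
     (SUP x\<in>unit_ball_on Z. \<bar>f x\<bar>) = 1"

definition slice :: "'a set \<Rightarrow> ('a \<Rightarrow> real) \<Rightarrow> real \<Rightarrow> 'a set" where
  "slice C f \<alpha> = {x \<in> C. f x > (SUP y\<in>C. f y) - \<alpha>}"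

definition BDP_on :: "'a::real_normed_vector set \<Rightarrow> bool" where
  "BDP_on Z \<longleftrightarrow> (\<forall>\<epsilon>>0. \<exists>f \<alpha>. dual_unit_on Z f \<and> \<alpha> > 0 \<and>
                     diameter (slice (unit_ball_on Z) f \<alpha>) < \<epsilon>)"

end

theory Submission
  imports Defs
begin

lemma rat_span_exists:
  fixes C :: "'a::real_normed_vector set"
  assumes "countable C"
  shows "\<exists>T. countable T \<and> C \<subseteq> T \<and> 0 \<in> T \<and> (\<forall>x\<in>T. \<forall>y\<in>T. x + y \<in> T) \<and>
             (\<forall>q::real\<in>\<rat>. \<forall>x\<in>T. q *\<^sub>R x \<in> T)"
proof -
  define F where "F = (\<lambda>l::(rat \<times> 'a) list. sum_list (map (\<lambda>(q,c). of_rat q *\<^sub>R c) l))"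
  define T where "T = F ` lists (UNIV \<times> C)"
  have "countable (UNIV \<times> C :: (rat \<times> 'a) set)" using assms by simp
  hence ct: "countable T" unfolding T_def by simp
  have "C \<subseteq> T"
  proof
    fix c assume "c \<in> C"
    hence "[(1,c)] \<in> lists (UNIV \<times> C)" by simp
    moreover have "F [(1,c)] = c" by (simp add: F_def)
    ultimately show "c \<in> T" unfolding T_def by (metis image_eqI)
  qed
  moreover have "0 \<in> T" unfolding T_def
    by (rule image_eqI[of _ _ "[]"]) (auto simp: F_def)
  moreover have "\<forall>x\<in>T. \<forall>y\<in>T. x + y \<in> T"
  proof (intro ballI)
    fix x y assume "x \<in> T" "y \<in> T"
    then obtain l1 l2 where "l1 \<in> lists (UNIV \<times> C)" "l2 \<in> lists (UNIV \<times> C)" "x = F l1" "y = F l2"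
      unfolding T_def by auto
    moreover have "F (l1 @ l2) = F l1 + F l2" by (simp add: F_def)
    ultimately show "x + y \<in> T" unfolding T_def
      by (metis append_in_lists_conv image_eqI)
  qed
  moreover have "\<forall>q::real\<in>\<rat>. \<forall>x\<in>T. q *\<^sub>R x \<in> T"
  proof (intro ballI)
    fix q :: real and x assume "q \<in> \<rat>" "x \<in> T"
    then obtain r where r: "q = of_rat r" by (auto elim: Rats_cases)
    obtain l where l: "l \<in> lists (UNIV \<times> C)" "x = F l" using \<open>x \<in> T\<close> unfolding T_def by auto
    define l' where "l' = map (\<lambda>(p,c). (r*p, c)) l"
    have "l' \<in> lists (UNIV \<times> C)" using l(1) unfolding l'_def by auto
    moreover have "F l' = q *\<^sub>R F l"
      unfolding l'_def F_def r
      by (induction l) (auto simp: of_rat_mult scaleR_add_right)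
    ultimately show "q *\<^sub>R x \<in> T" using l unfolding T_def by (metis image_eqI)
  qed
  ultimately show ?thesis using ct by blast
qed

lemma closure_rat_subspace:
  fixes T :: "'a::real_normed_vector set"
  assumes "0 \<in> T" "\<forall>x\<in>T. \<forall>y\<in>T. x + y \<in> T" "\<forall>q::real\<in>\<rat>. \<forall>x\<in>T. q *\<^sub>R x \<in> T"
  shows "subspace (closure T)"
  unfolding subspace_def
proof (intro conjI ballI allI)
  show "0 \<in> closure T" using assms(1) closure_subset by blast
next
  fix x y assume "x \<in> closure T" "y \<in> closure T"
  then obtain a b where a: "\<forall>n. a n \<in> T" "a \<longlonglongrightarrow> x" and b: "\<forall>n. b n \<in> T" "b \<longlonglongrightarrow> y"
    unfolding closure_sequential by blast
  have "\<forall>n. a n + b n \<in> T" using a b assms(2) by blast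
  moreover have "(\<lambda>n. a n + b n) \<longlonglongrightarrow> x + y" using a b by (intro tendsto_add)
  ultimately show "x + y \<in> closure T" unfolding closure_sequential by (intro exI[of _ "\<lambda>n. a n + b n"]) auto
next
  fix c :: real and x assume "x \<in> closure T"
  then obtain a where a: "\<forall>n. a n \<in> T" "a \<longlonglongrightarrow> x"
    unfolding closure_sequential by blast
  have "c \<in> closure \<rat>" by (simp add: Rats_closure_real)
  then obtain q where q: "\<forall>n. q n \<in> \<rat>" "q \<longlonglongrightarrow> c"
    unfolding closure_sequential by blast
  have "\<forall>n. q n *\<^sub>R a n \<in> T" using a q assms(3) by blast
  moreover have "(\<lambda>n. q n *\<^sub>R a n) \<longlonglongrightarrow> c *\<^sub>R x" using a q by (intro tendsto_scaleR)
  ultimately show "c *\<^sub>R x \<in> closure T" unfolding closure_sequential by (intro exI[of _ "\<lambda>n. q n *\<^sub>R a n"]) auto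
qed

lemma SUP_div_pos:
  fixes h :: "'b \<Rightarrow> real"
  assumes "A \<noteq> {}" "bdd_above (h ` A)" "c > 0"
  shows "(SUP x\<in>A. h x / c) = (SUP x\<in>A. h x) / c"
proof (rule antisym)
  show "(SUP x\<in>A. h x / c) \<le> (SUP x\<in>A. h x) / c"
    using assms by (intro cSUP_least) (auto intro!: divide_right_mono cSUP_upper)
next
  have bd: "bdd_above ((\<lambda>x. h x / c) ` A)"
  proof -
    obtain M where "\<forall>x\<in>A. h x \<le> M" using assms(2) by (auto simp: bdd_above_def)
    hence "\<forall>x\<in>A. h x / c \<le> M / c" using assms(3) by (auto intro: divide_right_mono)
    thus ?thesis by (auto simp: bdd_above_def)
  qed
  have "(SUP x\<in>A. h x) \<le> c * (SUP x\<in>A. h x / c)"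
  proof (rule cSUP_least[OF assms(1)])
    fix x assume "x \<in> A"
    have "h x / c \<le> (SUP x\<in>A. h x / c)" using bd \<open>x\<in>A\<close> by (rule cSUP_upper2) simp
    thus "h x \<le> c * (SUP x\<in>A. h x / c)" using pos_divide_le_eq[OF assms(3)] by (simp add: mult.commute)
  qed
  thus "(SUP x\<in>A. h x) / c \<le> (SUP x\<in>A. h x / c)" using assms(3)
    by (simp add: divide_le_eq mult.commute)
qed

lemma dual_bound:
  assumes "dual_unit_on Z f"
  shows "\<exists>K\<ge>0. \<forall>x\<in>Z. \<bar>f x\<bar> \<le> K * norm x"
proof -
  obtain K where K: "\<forall>x\<in>Z. \<bar>f x\<bar> \<le> K * norm x" using assms unfolding dual_unit_on_def by blast
  have "\<forall>x\<in>Z. \<bar>f x\<bar> \<le> \<bar>K\<bar> * norm x"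
    using K by (meson abs_ge_self dual_order.trans mult_right_mono norm_ge_zero)
  thus ?thesis by (intro exI[of _ "\<bar>K\<bar>"]) auto
qed

lemma slice_point:
  fixes f :: "'a::real_normed_vector \<Rightarrow> real"
  assumes "dual_unit_on UNIV f" "\<alpha> > 0"
  shows "\<exists>x\<in>unit_ball_on UNIV. f x > (SUP y\<in>unit_ball_on UNIV. f y) - \<alpha> \<and> f x > 0"
proof -
  let ?B = "unit_ball_on (UNIV::'a set)"
  obtain K where K: "K \<ge> 0" "\<forall>x. \<bar>f x\<bar> \<le> K * norm x" using dual_bound[OF assms(1)] by auto
  have Bb: "\<forall>x\<in>?B. \<bar>f x\<bar> \<le> K"
    using K by (auto simp: unit_ball_on_def) (meson dual_order.trans mult_left_le)
  have B0: "0 \<in> ?B" by (simp add: unit_ball_on_def)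
  have bd: "bdd_above (f ` ?B)" using Bb by (auto simp: bdd_above_def) (meson abs_le_D1)
  have lin: "\<forall>c x. f (c *\<^sub>R x) = c * f x" using assms(1) unfolding dual_unit_on_def by auto
  have "\<exists>x\<in>?B. f x \<noteq> 0"
  proof (rule ccontr)
    assume "\<not> ?thesis"
    hence "(\<lambda>x. \<bar>f x\<bar>) ` ?B = {0}" using B0 by auto
    hence "(SUP x\<in>?B. \<bar>f x\<bar>) = 0" by simp
    thus False using assms(1) unfolding dual_unit_on_def by simp
  qed
  then obtain x where x: "x \<in> ?B" "f x \<noteq> 0" by blast
  have "\<exists>y\<in>?B. f y > 0"
  proof (cases "f x > 0")
    case True thus ?thesis using x by blast
  next
    case False
    have "f ((-1) *\<^sub>R x) = - f x" using lin[rule_format, of "-1" x] by simp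
    moreover have "(-1) *\<^sub>R x \<in> ?B" using x by (simp add: unit_ball_on_def)
    ultimately show ?thesis using False x by (intro bexI[of _ "(-1) *\<^sub>R x"]) auto
  qed
  then obtain y where y: "y \<in> ?B" "f y > 0" by blast
  have sp: "(SUP y\<in>?B. f y) > 0"
    using y bd by (meson cSUP_upper less_le_trans)
  have "max ((SUP y\<in>?B. f y) - \<alpha>) 0 < (SUP y\<in>?B. f y)" using sp assms(2) by simp
  then obtain z where "z \<in> ?B" "max ((SUP y\<in>?B. f y) - \<alpha>) 0 < f z"
    using less_cSUP_iff[OF _ bd] B0 by blast
  thus ?thesis by auto
qed

theorem mainTheorem2:
  fixes Y :: "'a::banach set"
  assumes "BDP_on (UNIV :: 'a set)"
    and "subspace Y" and "closed Y" and "separable_space (subtopology euclidean Y)"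
  shows "\<exists>Z. subspace Z \<and> closed Z \<and> separable_space (subtopology euclidean Z) \<and>
             Y \<subseteq> Z \<and> BDP_on Z"
proof -
  let ?BX = "unit_ball_on (UNIV::'a set)"
  have ex: "\<forall>n::nat. \<exists>f \<alpha> x. dual_unit_on UNIV f \<and> \<alpha> > 0 \<and>
          diameter (slice ?BX f \<alpha>) < 1 / Suc n \<and>
          x \<in> ?BX \<and> f x > (SUP y\<in>?BX. f y) - \<alpha> \<and> f x > 0"
  proof
    fix n :: nat
    have "(1::real) / Suc n > 0" by simp
    then obtain f \<alpha> where "dual_unit_on UNIV f" "\<alpha> > 0" "diameter (slice ?BX f \<alpha>) < 1 / Suc n"
      using assms(1) unfolding BDP_on_def by blast
    thus "\<exists>f \<alpha> x. dual_unit_on UNIV f \<and> \<alpha> > 0 \<and>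
          diameter (slice ?BX f \<alpha>) < 1 / Suc n \<and>
          x \<in> ?BX \<and> f x > (SUP y\<in>?BX. f y) - \<alpha> \<and> f x > 0"
    proof -
      from slice_point[OF \<open>dual_unit_on UNIV f\<close> \<open>\<alpha> > 0\<close>] obtain x where
        "x \<in> ?BX" "f x > (SUP y\<in>?BX. f y) - \<alpha>" "f x > 0" by blast
      thus ?thesis using \<open>dual_unit_on UNIV f\<close> \<open>\<alpha> > 0\<close> \<open>diameter (slice ?BX f \<alpha>) < 1 / Suc n\<close>
        by blast
    qed
  qed
  obtain fs \<alpha>s xs where P: "\<And>n. dual_unit_on UNIV (fs n) \<and> \<alpha>s n > 0 \<and>
          diameter (slice ?BX (fs n) (\<alpha>s n)) < 1 / Suc n \<and>
          xs n \<in> ?BX \<and> fs n (xs n) > (SUP y\<in>?BX. fs n y) - \<alpha>s n \<and> fs n (xs n) > 0"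
  proof -
    from choice[OF ex] obtain fs where "\<forall>n. \<exists>\<alpha> x. dual_unit_on UNIV (fs n) \<and> \<alpha> > 0 \<and>
          diameter (slice ?BX (fs n) \<alpha>) < 1 / Suc n \<and>
          x \<in> ?BX \<and> fs n x > (SUP y\<in>?BX. fs n y) - \<alpha> \<and> fs n x > 0" by blast
    from choice[OF this] obtain \<alpha>s where "\<forall>n. \<exists>x. dual_unit_on UNIV (fs n) \<and> \<alpha>s n > 0 \<and>
          diameter (slice ?BX (fs n) (\<alpha>s n)) < 1 / Suc n \<and>
          x \<in> ?BX \<and> fs n x > (SUP y\<in>?BX. fs n y) - \<alpha>s n \<and> fs n x > 0" by blast
    from choice[OF this] obtain xs where "\<forall>n. dual_unit_on UNIV (fs n) \<and> \<alpha>s n > 0 \<and>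
          diameter (slice ?BX (fs n) (\<alpha>s n)) < 1 / Suc n \<and>
          xs n \<in> ?BX \<and> fs n (xs n) > (SUP y\<in>?BX. fs n y) - \<alpha>s n \<and> fs n (xs n) > 0" by blast
    thus ?thesis using that by blast
  qed
  obtain D where D: "countable D" "D \<subseteq> Y" "(subtopology euclidean Y) closure_of D = Y"
    using assms(4) unfolding separable_space_def by auto
  have YD: "Y \<subseteq> closure D"
    using D(3) closure_of_subtopology_open[where X=euclidean and U=Y and S=D] D(2) by auto
  have cDx: "countable (D \<union> range xs)" using D(1) by simp
  obtain T where T: "countable T" "D \<union> range xs \<subseteq> T" "0 \<in> T" "\<forall>x\<in>T. \<forall>y\<in>T. x + y \<in> T"
             "\<forall>q::real\<in>\<rat>. \<forall>x\<in>T. q *\<^sub>R x \<in> T"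
    using rat_span_exists[OF cDx] by (elim exE conjE) blast
  define Z where "Z = closure T"
  have subZ: "subspace Z" unfolding Z_def using T by (intro closure_rat_subspace) auto
  have clZ: "closed Z" unfolding Z_def by simp
  have sepZ: "separable_space (subtopology euclidean Z)"
    unfolding separable_space_def
  proof (intro exI[of _ T] conjI)
    show "countable T" by fact
    show "T \<subseteq> topspace (subtopology euclidean Z)" using closure_subset by (auto simp: Z_def)
    show "subtopology euclidean Z closure_of T = topspace (subtopology euclidean Z)"
      using closure_of_subtopology_open[where X=euclidean and U=Z and S=T] closure_subset by (auto simp: Z_def)
  qed
  have YZ: "Y \<subseteq> Z" using YD closure_mono[of D T] T(2) unfolding Z_def by blast
  have xZ: "xs n \<in> Z" for n using T(2) closure_subset unfolding Z_def by blast
  have BDP: "BDP_on Z"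
    unfolding BDP_on_def
  proof (intro allI impI)
    fix \<epsilon> :: real assume "\<epsilon> > 0"
    then obtain n :: nat where n: "1 / Suc n < \<epsilon>"
      using nat_approx_posE by blast
    define f where "f = fs n"
    define \<alpha> where "\<alpha> = \<alpha>s n"
    define x0 where "x0 = xs n"
    define s where "s = (SUP y\<in>?BX. f y)"
    let ?BZ = "unit_ball_on Z"
    have Pn: "dual_unit_on UNIV f" "\<alpha> > 0" "diameter (slice ?BX f \<alpha>) < 1 / Suc n"
         "x0 \<in> ?BX" "f x0 > s - \<alpha>" "f x0 > 0"
      using P[of n] unfolding f_def \<alpha>_def x0_def s_def by auto
    obtain K where K: "K \<ge> 0" "\<forall>x. \<bar>f x\<bar> \<le> K * norm x" using dual_bound[OF Pn(1)] by auto
    have add: "\<forall>x y. f (x + y) = f x + f y" and lin: "\<forall>c x. f (c *\<^sub>R x) = c * f x"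
      using Pn(1) unfolding dual_unit_on_def by auto
    have BZX: "?BZ \<subseteq> ?BX" by (auto simp: unit_ball_on_def)
    have x0Z: "x0 \<in> ?BZ" using xZ Pn(4) unfolding x0_def by (auto simp: unit_ball_on_def)
    have Bb: "\<forall>x\<in>?BZ. \<bar>f x\<bar> \<le> K"
      using K by (auto simp: unit_ball_on_def) (meson dual_order.trans mult_left_le)
    have bdabs: "bdd_above ((\<lambda>x. \<bar>f x\<bar>) ` ?BZ)" using Bb by (auto simp: bdd_above_def)
    define c where "c = (SUP x\<in>?BZ. \<bar>f x\<bar>)"
    have "\<bar>f x0\<bar> \<le> c" unfolding c_def using bdabs x0Z by (rule cSUP_upper2) simp
    hence cpos: "c > 0" using Pn(6) by simp
    define g where "g = (\<lambda>x. f x / c)"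
    have dg: "dual_unit_on Z g"
      unfolding dual_unit_on_def
    proof (intro conjI ballI allI)
      fix x y show "g (x + y) = g x + g y" using add by (simp add: g_def add_divide_distrib)
    next
      fix a x show "g (a *\<^sub>R x) = a * g x" using lin by (simp add: g_def)
    next
      show "\<exists>K. \<forall>x\<in>Z. \<bar>g x\<bar> \<le> K * norm x"
      proof (intro exI[of _ "K / c"] ballI)
        fix x
        have "\<bar>g x\<bar> = \<bar>f x\<bar> / c" using cpos by (simp add: g_def)
        also have "\<dots> \<le> K * norm x / c" using K(2) cpos by (simp add: divide_right_mono)
        finally show "\<bar>g x\<bar> \<le> K / c * norm x" by simp
      qed
    next
      have "(SUP x\<in>?BZ. \<bar>g x\<bar>) = (SUP x\<in>?BZ. \<bar>f x\<bar> / c)"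
        using cpos by (simp add: g_def)
      also have "\<dots> = c / c"
        using SUP_div_pos[OF _ bdabs cpos] x0Z unfolding c_def[symmetric] by (metis empty_iff)
      also have "\<dots> = 1" using cpos by simp
      finally show "(SUP x\<in>?BZ. \<bar>g x\<bar>) = 1" .
    qed
    have bdg: "bdd_above (g ` ?BZ)"
    proof -
      have "\<forall>x\<in>?BZ. g x \<le> K / c" using Bb cpos unfolding g_def
        by (meson abs_le_D1 divide_right_mono less_le)
      thus ?thesis by (auto simp: bdd_above_def)
    qed
    define sZ where "sZ = (SUP x\<in>?BZ. g x)"
    define \<beta> where "\<beta> = sZ - (s - \<alpha>) / c"
    have "g x0 \<le> sZ" unfolding sZ_def using bdg x0Z by (rule cSUP_upper2) simp
    moreover have "g x0 > (s - \<alpha>) / c" unfolding g_def using Pn(5) cpos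
      by (simp add: divide_strict_right_mono)
    ultimately have bpos: "\<beta> > 0" unfolding \<beta>_def by simp
    have sub: "slice ?BZ g \<beta> \<subseteq> slice ?BX f \<alpha>"
    proof
      fix x assume "x \<in> slice ?BZ g \<beta>"
      hence "x \<in> ?BZ" "g x > (s - \<alpha>) / c" unfolding slice_def \<beta>_def sZ_def by auto
      moreover from this(2) have "f x > s - \<alpha>" using cpos unfolding g_def
        by (simp add: divide_less_cancel)
      ultimately show "x \<in> slice ?BX f \<alpha>" using BZX unfolding slice_def s_def by auto
    qed
    have bX: "bounded (slice ?BX f \<alpha>)"
      by (rule bounded_subset[of "cball 0 1"]) (auto simp: slice_def unit_ball_on_def)
    have "diameter (slice ?BZ g \<beta>) \<le> diameter (slice ?BX f \<alpha>)"
      by (rule diameter_subset[OF sub bX])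
    hence "diameter (slice ?BZ g \<beta>) < \<epsilon>" using Pn(3) n by linarith
    thus "\<exists>f \<alpha>. dual_unit_on Z f \<and> \<alpha> > 0 \<and> diameter (slice ?BZ f \<alpha>) < \<epsilon>"
      using dg bpos by blast
  qed
  show ?thesis using subZ clZ sepZ YZ BDP by blast
qed

end
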